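(* For every integer $n\ge 2$, $$\operatorname{op}_{[2,\underbrace{1,\dots,1}_{n-2}]}(123) = \frac{3(n-1)\binom{2n-2}{n-1}}{n(n+1)}.$$
   Context: An ordered set partition of $[N]$ into $k$ blocks is a sequence $B_1/B_2/\cdots/B_k$ of nonempty, pairwise disjoint subsets of $[N]$ whose union is $[N]$; the order of the blocks matters, but not the order of elements within a block. For a permutation $\rho=\rho_1\cdots\rho_m\in\mathcal{S}_m$, an ordered partition $B_1/\cdots/B_k$ contains $\rho$ if there are block indices $i_1<i_2<\cdots<i_m$ and elements $b_j\in B_{i_j}$ such that $b_1\cdots b_m$ is order-isomorphic to $\rho$; otherwise it avoids $\rho$. For positive integers $b_1,\dots,b_k$, $\operatorname{op}_{[b_1,\dots,b_k]}(\rho)$ is the number of $\rho$-avoiding ordered partitions $B_1/\cdots/B_k$ of $[b_1+\cdots+b_k]$ with $|B_i|=b_i$ for all $i$. Thus $\operatorname{op}_{[2,1,\dots,1]}(123)$ (with $n-2$ ones) counts $123$-avoiding ordered partitions of $[n]$ whose first block has size $2$ and all other $n-2$ blocks have size $1$. *)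

theory Defs
  imports Complex_Main
begin

definition ordered_set_partition :: "nat set \<Rightarrow> nat set list \<Rightarrow> bool" where
  "ordered_set_partition S Bs \<longleftrightarrow>
     (\<forall>i < length Bs. Bs ! i \<noteq> {}) \<and>
     (\<forall>i < length Bs. \<forall>j < length Bs. i \<noteq> j \<longrightarrow> Bs ! i \<inter> Bs ! j = {}) \<and>
     \<Union>(set Bs) = S"

definition op_contains :: "nat set list \<Rightarrow> nat list \<Rightarrow> bool" where
  "op_contains Bs \<rho> \<longleftrightarrow>
     (\<exists>is bs. length is = length \<rho> \<and> length bs = length \<rho> \<and>
        sorted_wrt (<) is \<and>
        (\<forall>j < length \<rho>. is ! j < length Bs \<and> bs ! j \<in> Bs ! (is ! j)) \<and>
        (\<forall>j < length \<rho>. \<forall>j' < length \<rho>. bs ! j < bs ! j' \<longleftrightarrow> \<rho> ! j < \<rho> ! j'))"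

definition op_count :: "nat list \<Rightarrow> nat list \<Rightarrow> nat" where
  "op_count bsz \<rho> = card {Bs. ordered_set_partition {1..sum_list bsz} Bs \<and>
                             map card Bs = bsz \<and> \<not> op_contains Bs \<rho>}"

end

theory Submission
  imports Defs
begin

fun F :: "nat \<Rightarrow> nat \<Rightarrow> nat" where
"F 0 r = 1" | "F (Suc k) r = (\<Sum>i<r. F k i) + (if r \<le> k then F k r else 0)"

definition G :: "nat \<Rightarrow> nat \<Rightarrow> real" where
"G k r = (real k + 1 - real r) * fact (k+r) / (fact (k+1) * fact r)"

lemma G_step: "Suc r \<le> k \<Longrightarrow> G (Suc k) r + G k (Suc r) = G (Suc k) (Suc r)"
proof -
  assume "Suc r \<le> k"
  have e1: "fact (Suc k + r) = (real k + real r + 1) * fact (k+r)" by (simp add: algebra_simps)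
  have e2: "fact (k + Suc r) = (real k + real r + 1) * fact (k+r)" by (simp add: algebra_simps)
  have e3: "fact (Suc k + Suc r) = (real k + real r + 2) * (real k + real r + 1) * fact (k+r)"
    by (simp add: algebra_simps)
  have e4: "fact (Suc k + 1) = (real k + 2) * (real k + 1) * fact k" by (simp add: algebra_simps)
  have e5: "fact (k + 1) = (real k + 1) * fact k" by (simp add: algebra_simps)
  have e6: "fact (Suc r) = (real r + 1) * fact r" by (simp add: algebra_simps)
  have p: "(fact k :: real) > 0" "(fact r :: real) > 0" "(fact (k+r)::real) > 0"
    "real k + 1 > 0" "real k + 2 > 0" "real r + 1 > 0" by auto
  show ?thesis unfolding G_def e1 e2 e3 e4 e5 e6 using p
    by (simp add: divide_simps, simp add: algebra_simps)
qed

lemma G_sum: "r \<le> k \<Longrightarrow> (\<Sum>i<Suc r. G k i) = G (Suc k) r"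
proof (induction r)
  case 0
  have "real k + 1 > 0" "real k + 2 > 0" "(fact k :: real) > 0" by auto
  then show ?case by (simp add: G_def divide_simps)
next
  case (Suc r)
  then have "(\<Sum>i<Suc (Suc r). G k i) = G (Suc k) r + G k (Suc r)" by simp
  then show ?case using G_step Suc.prems by simp
qed

lemma F_closed: "r \<le> k \<Longrightarrow> real (F k r) = G k r"
proof (induction k arbitrary: r)
  case 0 then show ?case by (simp add: G_def)
next
  case (Suc k)
  have sumk: "real (\<Sum>i<Suc r'. F k i) = G (Suc k) r'" if "r' \<le> k" for r'
  proof -
    have "real (\<Sum>i<Suc r'. F k i) = (\<Sum>i<Suc r'. G k i)"
      using Suc.IH that by (simp add: of_nat_sum)
    also have "\<dots> = G (Suc k) r'" using G_sum that by simp
    finally show ?thesis .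
  qed
  show ?case
  proof (cases "r \<le> k")
    case True
    then have "F (Suc k) r = (\<Sum>i<Suc r. F k i)" by simp
    then show ?thesis using sumk True by simp
  next
    case False
    then have r: "r = Suc k" using Suc.prems by simp
    have "F (Suc k) r = (\<Sum>i<Suc k. F k i)" using r by simp
    then have "real (F (Suc k) r) = G (Suc k) k" using sumk by simp
    also have "\<dots> = G (Suc k) (Suc k)"
    proof -
      have e3: "fact (Suc k + Suc k) = (2*real k + 2) * fact (Suc k + k)"
        by (simp add: algebra_simps)
      have e6: "fact (Suc k) = (real k + 1) * fact k" by (simp add: algebra_simps)
      have p: "(fact k :: real) > 0" "(fact (Suc k + k)::real) > 0"
        "real k + 1 > 0" "(fact (Suc k + 1)::real) > 0" by auto
      have "G (Suc k) k = 2 * fact (Suc k + k) / (fact (Suc k + 1) * fact k)"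
        unfolding G_def by simp
      also have "\<dots> = ((real k + 1) * (2 * fact (Suc k + k))) / ((real k + 1) * (fact (Suc k + 1) * fact k))"
        using p by (subst mult_divide_mult_cancel_left) auto
      also have "\<dots> = G (Suc k) (Suc k)" unfolding G_def e3 e6 
        by (simp add: algebra_simps)
      finally show ?thesis .
    qed
    finally show ?thesis using r by simp
  qed
qed

lemma tri_sum: "(\<Sum>r\<le>m. (m+1-r) * f r) = (\<Sum>j\<le>m. \<Sum>r\<le>j. (f r :: nat))"
proof (induction m)
  case 0 then show ?case by simp
next
  case (Suc m)
  have "(\<Sum>r\<le>Suc m. (Suc m+1-r) * f r) = (\<Sum>r\<le>Suc m. (m+1-r) * f r + f r)"
    by (rule sum.cong) (auto simp: algebra_simps Suc_diff_le)
  also have "\<dots> = (\<Sum>r\<le>m. (m+1-r) * f r) + (\<Sum>r\<le>Suc m. f r)"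
    by (simp add: sum.distrib)
  finally show ?case using Suc.IH by simp
qed

lemma F_tri: "F (Suc (Suc k)) k = (\<Sum>r\<le>k. (k+1-r) * F k r)"
proof -
  have "F (Suc (Suc k)) k = (\<Sum>i\<le>k. F (Suc k) i)"
    by (simp add: lessThan_Suc_atMost[symmetric])
  also have "\<dots> = (\<Sum>j\<le>k. \<Sum>r\<le>j. F k r)"
    by (rule sum.cong) (auto simp: lessThan_Suc_atMost[symmetric])
  finally show ?thesis using tri_sum[of k "F k"] by simp
qed



fun av :: "nat \<Rightarrow> nat list \<Rightarrow> bool" where
"av t [] = True" |
"av t (x#w) = (if x \<le> t then av x w else av t w \<and> (\<forall>y\<in>set w. y \<le> x))"

definition L :: "nat set \<Rightarrow> nat \<Rightarrow> nat list set" where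
"L S t = {w. distinct w \<and> set w = S \<and> av t w}"

lemma L_finite: "finite S \<Longrightarrow> finite (L S t)"
proof -
  assume f: "finite S"
  have "L S t \<subseteq> {w. set w \<subseteq> S \<and> length w \<le> card S}"
    unfolding L_def using distinct_card by fastforce
  moreover have "finite {w. set w \<subseteq> S \<and> length w \<le> card S}"
    using finite_lists_length_le[OF f] by simp
  ultimately show ?thesis using finite_subset by blast
qed

lemma L_decomp:
  assumes "finite S" "S \<noteq> {}"
  shows "L S t = (\<Union>x\<in>S. (Cons x) ` (if x \<le> t then L (S - {x}) x
                  else if x = Max S then L (S - {x}) t else {}))"
proof (intro set_eqI iffI)
  fix w assume "w \<in> L S t"
  then have w: "distinct w" "set w = S" "av t w" unfolding L_def by auto
  then obtain x w' where xw: "w = x # w'" using assms by (cases w) auto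
  have xS: "x \<in> S" using w xw by auto
  show "w \<in> (\<Union>x\<in>S. (Cons x) ` (if x \<le> t then L (S - {x}) x
                  else if x = Max S then L (S - {x}) t else {}))"
  proof (cases "x \<le> t")
    case True
    then have "w' \<in> L (S - {x}) x" using w xw unfolding L_def by auto
    then show ?thesis using xS xw True by auto
  next
    case False
    then have "w' \<in> L (S - {x}) t" "\<forall>y\<in>S. y \<le> x" using w xw unfolding L_def by auto
    moreover then have "x = Max S" by (intro Max_eqI[symmetric]) (use assms xS in auto)
    ultimately show ?thesis using xS xw False by auto
  qed
next
  fix w assume "w \<in> (\<Union>x\<in>S. (Cons x) ` (if x \<le> t then L (S - {x}) x
                  else if x = Max S then L (S - {x}) t else {}))"
  then obtain x w' where xS: "x \<in> S" and xw: "w = x # w'" and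
    w': "w' \<in> (if x \<le> t then L (S - {x}) x else if x = Max S then L (S - {x}) t else {})" by auto
  show "w \<in> L S t"
  proof (cases "x \<le> t")
    case True then show ?thesis using w' xw xS unfolding L_def by auto
  next
    case False
    then have "x = Max S" "w' \<in> L (S - {x}) t" using w' by (auto split: if_splits)
    then have "\<forall>y\<in>S. y \<le> x" using assms by simp
    then show ?thesis using w' xw xS False \<open>w' \<in> L (S - {x}) t\<close> unfolding L_def by auto
  qed
qed

lemma rank_bij:
  fixes S :: "nat set"
  assumes "finite S"
  shows "bij_betw (\<lambda>x. card {s\<in>S. s < x}) {x\<in>S. x \<le> t} {..<card {s\<in>S. s \<le> t}}"
proof -
  let ?f = "\<lambda>x. card {s\<in>S. s < x}"
  have inj: "inj_on ?f {x\<in>S. x \<le> t}"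
  proof (rule inj_onI)
    fix x y assume x: "x \<in> {x\<in>S. x \<le> t}" and y: "y \<in> {x\<in>S. x \<le> t}" and e: "?f x = ?f y"
    show "x = y"
    proof (rule ccontr)
      assume "x \<noteq> y"
      show False
      proof (cases "x < y")
        case True
        note 1 = True
        have s1: "{s\<in>S. s < x} \<subseteq> {s\<in>S. s < y}" using 1 by auto
        have s2: "x \<in> {s\<in>S. s < y}" "x \<notin> {s\<in>S. s < x}" using 1 x y by auto
        have "{s\<in>S. s < x} \<subset> {s\<in>S. s < y}" using s1 s2 by blast
        then have "?f x < ?f y" using assms by (intro psubset_card_mono) auto
        then show False using e by linarith
      next
        case False
        have 2: "y < x" using False \<open>x \<noteq> y\<close> by simp
        have s1: "{s\<in>S. s < y} \<subseteq> {s\<in>S. s < x}" using 2 by auto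
        have s2: "y \<in> {s\<in>S. s < x}" "y \<notin> {s\<in>S. s < y}" using 2 x y by auto
        have "{s\<in>S. s < y} \<subset> {s\<in>S. s < x}" using s1 s2 by blast
        then have "?f y < ?f x" using assms by (intro psubset_card_mono) auto
        then show False using e by linarith
      qed
    qed
  qed
  have sub: "?f ` {x\<in>S. x \<le> t} \<subseteq> {..<card {s\<in>S. s \<le> t}}"
  proof
    fix i assume "i \<in> ?f ` {x\<in>S. x \<le> t}"
    then obtain x where x: "x \<in> S" "x \<le> t" "i = ?f x" by auto
    have s1: "{s\<in>S. s < x} \<subseteq> {s\<in>S. s \<le> t}" using x by auto
    have s2: "x \<in> {s\<in>S. s \<le> t}" "x \<notin> {s\<in>S. s < x}" using x by auto
    have "{s\<in>S. s < x} \<subset> {s\<in>S. s \<le> t}" using s1 s2 by blast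
    then have "?f x < card {s\<in>S. s \<le> t}" using assms by (intro psubset_card_mono) auto
    then show "i \<in> {..<card {s\<in>S. s \<le> t}}" using x by simp
  qed
  have "card (?f ` {x\<in>S. x \<le> t}) = card {..<card {s\<in>S. s \<le> t}}"
    using card_image[OF inj] by simp
  then have "?f ` {x\<in>S. x \<le> t} = {..<card {s\<in>S. s \<le> t}}"
    using sub by (intro card_subset_eq) auto
  then show ?thesis using inj unfolding bij_betw_def by simp
qed

lemma L_card: "finite S \<Longrightarrow> card (L S t) = F (card S) (card {s\<in>S. s \<le> t})"
proof (induction "card S" arbitrary: S t)
  case 0
  then have "S = {}" by simp
  then have "L S t = {[]}" unfolding L_def by auto
  then show ?case using \<open>S = {}\<close> by simp
next
  case (Suc k)
  have ne: "S \<noteq> {}" using Suc.hyps by auto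
  let ?B = "\<lambda>x. (if x \<le> t then L (S - {x}) x else if x = Max S then L (S - {x}) t else {})"
  have fin: "finite (?B x)" for x using Suc.prems L_finite by simp
  have "card (L S t) = card (\<Union>x\<in>S. (Cons x) ` ?B x)"
    using L_decomp[OF Suc.prems ne] by simp
  also have "\<dots> = (\<Sum>x\<in>S. card ((Cons x) ` ?B x))"
    using Suc.prems fin by (intro card_UN_disjoint) auto
  also have "\<dots> = (\<Sum>x\<in>S. card (?B x))"
    by (intro sum.cong refl card_image) (simp add: inj_on_def)
  also have "\<dots> = (\<Sum>x\<in>S. if x \<le> t then F k (card {s\<in>S. s < x})
                 else if x = Max S then F k (card {s\<in>S. s \<le> t}) else 0)"
  proof (intro sum.cong refl)
    fix x assume xS: "x \<in> S"
    have ck: "k = card (S - {x})" using Suc.hyps Suc.prems xS by simp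
    have fS: "finite (S - {x})" using Suc.prems by simp
    show "card (?B x) = (if x \<le> t then F k (card {s\<in>S. s < x})
                 else if x = Max S then F k (card {s\<in>S. s \<le> t}) else 0)"
    proof (cases "x \<le> t")
      case True
      have "card (?B x) = F k (card {s\<in>S - {x}. s \<le> x})"
        using True Suc.hyps(1)[OF ck fS] ck[symmetric] by simp
      moreover have "{s\<in>S - {x}. s \<le> x} = {s\<in>S. s < x}" by auto
      ultimately show ?thesis using True by simp
    next
      case False
      show ?thesis
      proof (cases "x = Max S")
        case True
        have "card (?B x) = F k (card {s\<in>S - {x}. s \<le> t})"
          using True False Suc.hyps(1)[OF ck fS] ck[symmetric] by simp
        moreover have "{s\<in>S - {x}. s \<le> t} = {s\<in>S. s \<le> t}" using False by auto
        ultimately show ?thesis using False True by simp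
      qed (use False in simp)
    qed
  qed
  also have "\<dots> = (\<Sum>x\<in>{x\<in>S. x \<le> t}. F k (card {s\<in>S. s < x}))
       + (\<Sum>x\<in>{x\<in>S. \<not> x \<le> t}. if x = Max S then F k (card {s\<in>S. s \<le> t}) else 0)"
  proof -
    have e: "{x\<in>S. x \<le> t} = S \<inter> {x. x \<le> t}" "{x\<in>S. \<not> x \<le> t} = S \<inter> - {x. x \<le> t}" by auto
    show ?thesis unfolding e by (rule sum.If_cases[OF Suc.prems])
  qed
  also have "(\<Sum>x\<in>{x\<in>S. x \<le> t}. F k (card {s\<in>S. s < x})) = (\<Sum>i<card {s\<in>S. s \<le> t}. F k i)"
    using sum.reindex_bij_betw[OF rank_bij[OF Suc.prems, of t], of "F k"] by simp
  also have "(\<Sum>x\<in>{x\<in>S. \<not> x \<le> t}. if x = Max S then F k (card {s\<in>S. s \<le> t}) else 0)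
       = (if card {s\<in>S. s \<le> t} \<le> k then F k (card {s\<in>S. s \<le> t}) else 0)"
  proof (cases "Max S \<le> t")
    case True
    have "\<forall>s\<in>S. s \<le> t" using Suc.prems True by (meson Max_ge le_trans)
    then have "{s\<in>S. s \<le> t} = S" by auto
    then have "\<not> card {s\<in>S. s \<le> t} \<le> k" using Suc.hyps by simp
    moreover have "\<forall>x\<in>{x\<in>S. \<not> x \<le> t}. x \<noteq> Max S" using True by auto
    ultimately show ?thesis by simp
  next
    case False
    have mS: "Max S \<in> S" using Suc.prems ne by simp
    then have "{s\<in>S. s \<le> t} \<subset> S" using False by auto
    then have "card {s\<in>S. s \<le> t} < card S" using Suc.prems psubset_card_mono by blast
    then have c: "card {s\<in>S. s \<le> t} \<le> k" using Suc.hyps by simp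
    have "(\<Sum>x\<in>{x\<in>S. \<not> x \<le> t}. if x = Max S then F k (card {s\<in>S. s \<le> t}) else 0)
          = F k (card {s\<in>S. s \<le> t})"
      using Suc.prems mS False by (subst sum.delta) auto
    then show ?thesis using c by simp
  qed
  finally show ?case using Suc.hyps(2)[symmetric] by simp
qed



definition has12 :: "nat \<Rightarrow> nat list \<Rightarrow> bool" where
"has12 t w \<longleftrightarrow> (\<exists>i j. i < j \<and> j < length w \<and> t < w!i \<and> w!i < w!j)"

definition has123 :: "nat list \<Rightarrow> bool" where
"has123 w \<longleftrightarrow> (\<exists>i j k. i < j \<and> j < k \<and> k < length w \<and> w!i < w!j \<and> w!j < w!k)"

lemma has12_Cons: "has12 t (x#w) \<longleftrightarrow> (t < x \<and> (\<exists>y\<in>set w. x < y)) \<or> has12 t w"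
proof
  assume "has12 t (x#w)"
  then obtain i j where h: "i < j" "j < Suc (length w)" "t < (x#w)!i" "(x#w)!i < (x#w)!j"
    unfolding has12_def by auto
  obtain j' where j: "j = Suc j'" using h by (cases j) auto
  show "(t < x \<and> (\<exists>y\<in>set w. x < y)) \<or> has12 t w"
  proof (cases i)
    case 0 then show ?thesis using h j by auto
  next
    case (Suc i') then show ?thesis using h j unfolding has12_def by auto
  qed
next
  assume "(t < x \<and> (\<exists>y\<in>set w. x < y)) \<or> has12 t w"
  then show "has12 t (x#w)"
  proof
    assume "t < x \<and> (\<exists>y\<in>set w. x < y)"
    then obtain j where "j < length w" "t < x" "x < w!j" by (auto simp: in_set_conv_nth)
    then show ?thesis unfolding has12_def by (intro exI[of _ 0] exI[of _ "Suc j"]) auto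
  next
    assume "has12 t w"
    then obtain i j where "i < j" "j < length w" "t < w!i" "w!i < w!j" unfolding has12_def by auto
    then show ?thesis unfolding has12_def by (intro exI[of _ "Suc i"] exI[of _ "Suc j"]) auto
  qed
qed

lemma has123_Cons: "has123 (x#w) \<longleftrightarrow> has12 x w \<or> has123 w"
proof
  assume "has123 (x#w)"
  then obtain i j k where h: "i < j" "j < k" "k < Suc (length w)" "(x#w)!i < (x#w)!j" "(x#w)!j < (x#w)!k"
    unfolding has123_def by auto
  obtain j' where j: "j = Suc j'" using h by (cases j) auto
  obtain k' where k: "k = Suc k'" using h by (cases k) auto
  show "has12 x w \<or> has123 w"
  proof (cases i)
    case 0 then show ?thesis using h j k unfolding has12_def by auto
  next
    case (Suc i') then show ?thesis using h j k unfolding has123_def by auto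
  qed
next
  assume "has12 x w \<or> has123 w"
  then show "has123 (x#w)"
  proof
    assume "has12 x w"
    then obtain i j where "i < j" "j < length w" "x < w!i" "w!i < w!j" unfolding has12_def by auto
    then show ?thesis unfolding has123_def
      by (intro exI[of _ 0] exI[of _ "Suc i"] exI[of _ "Suc j"]) auto
  next
    assume "has123 w"
    then obtain i j k where "i < j" "j < k" "k < length w" "w!i < w!j" "w!j < w!k"
      unfolding has123_def by auto
    then show ?thesis unfolding has123_def
      by (intro exI[of _ "Suc i"] exI[of _ "Suc j"] exI[of _ "Suc k"]) auto
  qed
qed

lemma has12_mono: "has12 t w \<Longrightarrow> s \<le> t \<Longrightarrow> has12 s w"
  unfolding has12_def by (meson le_less_trans)

lemma av_char: "distinct w \<Longrightarrow> av t w \<longleftrightarrow> \<not> has12 t w \<and> \<not> has123 w"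
proof (induction w arbitrary: t)
  case Nil then show ?case by (simp add: has12_def has123_def)
next
  case (Cons x w)
  have d: "distinct w" "x \<notin> set w" using Cons.prems by auto
  show ?case
  proof (cases "x \<le> t")
    case True
    then show ?thesis using Cons.IH[OF d(1)] has12_mono[of t w x]
      by (auto simp: has12_Cons has123_Cons)
  next
    case False
    have "(\<forall>y\<in>set w. y \<le> x) \<longleftrightarrow> \<not> (\<exists>y\<in>set w. x < y)" by auto
    then show ?thesis using False Cons.IH[OF d(1)] has12_mono[of x w t]
      by (auto simp: has12_Cons has123_Cons)
  qed
qed

lemma op_contains_123:
  "op_contains Bs [1,2,3] \<longleftrightarrow> (\<exists>i j k a b c. i < j \<and> j < k \<and> k < length Bs \<and>
      a \<in> Bs!i \<and> b \<in> Bs!j \<and> c \<in> Bs!k \<and> a < b \<and> b < c)"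
proof
  assume "op_contains Bs [1,2,3]"
  have len3: "length [1,2,3::nat] = 3" by simp
  from \<open>op_contains Bs [1,2,3]\<close> obtain "is" bs where h: "length is = 3" "length bs = 3" "sorted_wrt (<) is"
    "\<forall>j<3. is ! j < length Bs \<and> bs ! j \<in> Bs ! (is ! j)"
    "\<forall>j<3. \<forall>j'<3. bs ! j < bs ! j' \<longleftrightarrow> [1,2,3::nat] ! j < [1,2,3] ! j'"
    unfolding op_contains_def len3 by blast
  have s: "is!0 < is!1" "is!1 < is!2" using h(1,3) by (auto simp: sorted_wrt_iff_nth_less)
  have o: "bs!0 < bs!1" "bs!1 < bs!2" using h(5) by (auto dest: spec[of _ 0] spec[of _ 1] spec[of _ 2])
  have m: "is!2 < length Bs" "bs!0 \<in> Bs!(is!0)" "bs!1 \<in> Bs!(is!1)" "bs!2 \<in> Bs!(is!2)"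
    using h(4) by auto
  show "\<exists>i j k a b c. i < j \<and> j < k \<and> k < length Bs \<and>
      a \<in> Bs!i \<and> b \<in> Bs!j \<and> c \<in> Bs!k \<and> a < b \<and> b < c"
    using s o m by blast
next
  assume "\<exists>i j k a b c. i < j \<and> j < k \<and> k < length Bs \<and>
      a \<in> Bs!i \<and> b \<in> Bs!j \<and> c \<in> Bs!k \<and> a < b \<and> b < c"
  then obtain i j k a b c where h: "i < j" "j < k" "k < length Bs"
      "a \<in> Bs!i" "b \<in> Bs!j" "c \<in> Bs!k" "a < b" "b < c" by blast
  have a3: "\<And>P. (\<forall>j<Suc (Suc (Suc 0)). P j) \<longleftrightarrow> P 0 \<and> P (Suc 0) \<and> P (Suc (Suc 0))"
    by (auto simp: less_Suc_eq)
  show "op_contains Bs [1,2,3]" unfolding op_contains_def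
    apply (rule exI[of _ "[i,j,k]"], rule exI[of _ "[a,b,c]"])
    using h by (simp add: a3 del: All_less_Suc)
qed



lemma contains_P:
  "op_contains (P # map (\<lambda>x. {x}) w) [1,2,3] \<longleftrightarrow> (\<exists>a\<in>P. has12 a w) \<or> has123 w"
  (is "?L \<longleftrightarrow> ?R")
proof
  assume ?L
  then obtain i j k a b c where h: "i < j" "j < k" "k < Suc (length w)"
      "a \<in> (P # map (\<lambda>x. {x}) w)!i" "b \<in> (P # map (\<lambda>x. {x}) w)!j"
      "c \<in> (P # map (\<lambda>x. {x}) w)!k" "a < b" "b < c"
    unfolding op_contains_123 by auto
  obtain j' where j: "j = Suc j'" using h by (cases j) auto
  obtain k' where k: "k = Suc k'" using h by (cases k) auto
  have bc: "b = w!j'" "c = w!k'" "j' < k'" "k' < length w" using h j k by auto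
  show ?R
  proof (cases i)
    case 0
    then have "a \<in> P" using h by simp
    moreover have "has12 a w" unfolding has12_def using bc h by blast
    ultimately show ?thesis by blast
  next
    case (Suc i')
    then have "a = w!i'" "i' < j'" using h j by auto
    then have "has123 w" unfolding has123_def using bc h by blast
    then show ?thesis by blast
  qed
next
  assume ?R
  then show ?L
  proof
    assume "\<exists>a\<in>P. has12 a w"
    then obtain a i j where "a \<in> P" "i < j" "j < length w" "a < w!i" "w!i < w!j"
      unfolding has12_def by blast
    then show ?L unfolding op_contains_123
      by (intro exI[of _ 0] exI[of _ "Suc i"] exI[of _ "Suc j"] exI[of _ a] exI[of _ "w!i"] exI[of _ "w!j"]) auto
  next
    assume "has123 w"
    then obtain i j k where "i < j" "j < k" "k < length w" "w!i < w!j" "w!j < w!k"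
      unfolding has123_def by blast
    then show ?L unfolding op_contains_123
      by (intro exI[of _ "Suc i"] exI[of _ "Suc j"] exI[of _ "Suc k"] exI[of _ "w!i"] exI[of _ "w!j"] exI[of _ "w!k"]) auto
  qed
qed

lemma osp_char:
  "ordered_set_partition S (P # map (\<lambda>x. {x}) w) \<longleftrightarrow>
     P \<noteq> {} \<and> set w \<inter> P = {} \<and> distinct w \<and> P \<union> set w = S"
proof -
  let ?B = "P # map (\<lambda>x. {x}) w"
  have ne: "(\<forall>i < length ?B. ?B ! i \<noteq> {}) \<longleftrightarrow> P \<noteq> {}"
    by (auto simp: nth_Cons split: nat.splits)
  have dj: "(\<forall>i < length ?B. \<forall>j < length ?B. i \<noteq> j \<longrightarrow> ?B ! i \<inter> ?B ! j = {})
         \<longleftrightarrow> set w \<inter> P = {} \<and> distinct w"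
  proof
    assume a: "\<forall>i < length ?B. \<forall>j < length ?B. i \<noteq> j \<longrightarrow> ?B ! i \<inter> ?B ! j = {}"
    have "set w \<inter> P = {}"
    proof -
      { fix x assume "x \<in> set w" "x \<in> P"
        then obtain j where "j < length w" "w!j = x" by (auto simp: in_set_conv_nth)
        then have False using a[rule_format, of 0 "Suc j"] \<open>x \<in> P\<close> by auto }
      then show ?thesis by blast
    qed
    moreover have "distinct w" unfolding distinct_conv_nth
    proof (intro allI impI)
      fix i j assume "i < length w" "j < length w" "i \<noteq> j"
      then show "w!i \<noteq> w!j" using a[rule_format, of "Suc i" "Suc j"] by auto
    qed
    ultimately show "set w \<inter> P = {} \<and> distinct w" by blast
  next
    assume a: "set w \<inter> P = {} \<and> distinct w"
    show "\<forall>i < length ?B. \<forall>j < length ?B. i \<noteq> j \<longrightarrow> ?B ! i \<inter> ?B ! j = {}"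
    proof (intro allI impI)
      fix i j assume h: "i < length ?B" "j < length ?B" "i \<noteq> j"
      show "?B ! i \<inter> ?B ! j = {}"
      proof (cases i)
        case 0
        then obtain j' where "j = Suc j'" using h by (cases j) auto
        then show ?thesis using 0 h a by (auto simp: disjoint_iff)
      next
        case (Suc i')
        show ?thesis
        proof (cases j)
          case 0 then show ?thesis using Suc h a by (auto simp: disjoint_iff)
        next
          case (Suc j')
          then show ?thesis using \<open>i = Suc i'\<close> h a by (auto simp: nth_eq_iff_index_eq)
        qed
      qed
    qed
  qed
  have un: "\<Union>(set ?B) = P \<union> set w" by auto
  show ?thesis unfolding ordered_set_partition_def ne dj un by blast
qed



lemma ar: fixes X f K :: real assumes "f > 0" "K \<ge> 0"
  shows "3 * X / ((K+3)*(K+2)*((K+1)*f)*f) = 3*(K+1)*(X/(((K+1)*f)*((K+1)*f)))/((K+2)*(K+3))"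
proof -
  have "K+1 > 0" "K+2>0" "K+3>0" using assms by auto
  then show ?thesis using assms by (simp add: divide_simps)
qed

lemma final_arith: "G (Suc (Suc k)) k =
   3 * (real (Suc (Suc k)) - 1) * real ((2 * Suc (Suc k) - 2) choose (Suc (Suc k) - 1)) /
   (real (Suc (Suc k)) * (real (Suc (Suc k)) + 1))"
proof -
  have c: "real ((2 * Suc (Suc k) - 2) choose (Suc (Suc k) - 1)) = fact (2*k+2) / (fact (k+1) * fact (k+1))"
  proof -
    have a: "2 * Suc (Suc k) - 2 = 2*k+2" "Suc (Suc k) - 1 = k+1" "2*k+2-(k+1) = k+1" by simp_all
    have "k + 1 \<le> 2*k+2" by simp
    from binomial_fact[OF this] show ?thesis unfolding a by (simp only: a)
  qed
  have e1: "fact (Suc (Suc k) + 1) = (real k + 3) * (real k + 2) * ((real k + 1) * fact k)"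
    by (simp add: algebra_simps)
  have e2: "fact (k + 1) = (real k + 1) * fact k" by (simp add: algebra_simps)
  have e3: "Suc (Suc k) + k = 2*k+2" by simp
  have g: "G (Suc (Suc k)) k = 3 * fact (2*k+2) / ((real k+3)*(real k+2)*((real k+1)*fact k)*fact k)"
    unfolding G_def e1 e3 by simp
  have r: "3 * (real (Suc (Suc k)) - 1) * real ((2 * Suc (Suc k) - 2) choose (Suc (Suc k) - 1)) /
   (real (Suc (Suc k)) * (real (Suc (Suc k)) + 1)) =
    3*(real k+1)*(fact (2*k+2)/(((real k+1)*fact k)*((real k+1)*fact k)))/((real k+2)*(real k+3))"
    unfolding c e2 by (simp add: algebra_simps)
  show ?thesis unfolding g r by (rule ar) auto
qed


theorem lemma2:
  fixes n :: nat
  assumes "n \<ge> 2"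
  shows "real (op_count (2 # replicate (n - 2) 1) [1, 2, 3]) =
         3 * (real n - 1) * real ((2 * n - 2) choose (n - 1)) / (real n * (real n + 1))"
proof -
  obtain k where nk: "n = Suc (Suc k)" using assms by (metis add_2_eq_Suc le_Suc_ex)
  let ?bsz = "2 # replicate (n - 2) (1::nat)"
  have sl: "sum_list ?bsz = n" using assms by (simp add: sum_list_replicate)
  let ?T = "{Bs. ordered_set_partition {1..n} Bs \<and> map card Bs = ?bsz \<and> \<not> op_contains Bs [1,2,3]}"
  define Pairs where "Pairs = (SIGMA a:{1..n}. {a<..n})"
  define D where "D = (SIGMA p:Pairs. L ({1..n} - {fst p, snd p}) (fst p))"
  define g where "g = (\<lambda>(p::nat\<times>nat, w). {fst p, snd p} # map (\<lambda>x. {x}) w)"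
  have oc: "op_count ?bsz [1,2,3] = card ?T" unfolding op_count_def sl by simp
  have TD: "?T = g ` D"
  proof (intro set_eqI iffI)
    fix Bs assume "Bs \<in> ?T"
    then have Bs: "ordered_set_partition {1..n} Bs" "map card Bs = ?bsz" "\<not> op_contains Bs [1,2,3]"
      by auto
    obtain P R where BPR: "Bs = P # R" using Bs(2) by (cases Bs) auto
    have cP: "card P = 2" and cR: "map card R = replicate (n-2) 1" using Bs(2) BPR by auto
    have c1: "\<forall>X\<in>set R. card X = 1" using cR by (metis in_set_replicate list.set_map imageI)
    define w where "w = map the_elem R"
    have mid: "map (\<lambda>X. {the_elem X}) R = R"
    proof (rule map_idI)
      fix X assume "X \<in> set R"
      then have "card X = 1" using c1 by blast
      then show "{the_elem X} = X" by (metis card_1_singletonE the_elem_eq)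
    qed
    have Rw: "R = map (\<lambda>x. {x}) w" unfolding w_def using mid by (simp add: comp_def)
    have o: "P \<noteq> {}" "set w \<inter> P = {}" "distinct w" "P \<union> set w = {1..n}"
      using Bs(1) osp_char unfolding BPR Rw by auto
    obtain x y where xy: "P = {x,y}" "x \<noteq> y" using cP card_2_iff by metis
    obtain a b where ab: "P = {a,b}" "a < b"
    proof (cases "x < y")
      case True then show ?thesis using that xy by blast
    next
      case False then show ?thesis using that[of y x] xy by (auto simp: insert_commute)
    qed
    have abn: "a \<in> {1..n}" "b \<in> {1..n}" using o(4) ab by auto
    have nc: "\<not> has12 a w" "\<not> has123 w"
      using Bs(3) unfolding BPR Rw contains_P using ab by auto
    have "w \<in> L ({1..n} - {a,b}) a"
      unfolding L_def using o ab av_char[OF o(3)] nc by auto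
    then have "((a,b), w) \<in> D" unfolding D_def Pairs_def using abn ab by auto
    moreover have "Bs = g ((a,b), w)" unfolding g_def BPR Rw ab by simp
    ultimately show "Bs \<in> g ` D" by blast
  next
    fix Bs assume "Bs \<in> g ` D"
    then obtain a b w where ab: "a \<in> {1..n}" "b \<in> {a<..n}" and w: "w \<in> L ({1..n} - {a,b}) a"
      and Bs: "Bs = {a,b} # map (\<lambda>x. {x}) w"
      unfolding D_def Pairs_def g_def by auto
    have w': "distinct w" "set w = {1..n} - {a,b}" "av a w" using w unfolding L_def by auto
    have len: "length w = n - 2"
    proof -
      have "length w = card ({1..n} - {a,b})" using distinct_card[OF w'(1)] w'(2) by simp
      also have "\<dots> = n - 2" using ab by (subst card_Diff_subset) (auto simp: card_insert_if)
      finally show ?thesis .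
    qed
    have "ordered_set_partition {1..n} Bs" unfolding Bs osp_char
    proof (intro conjI)
      show "{a, b} \<noteq> {}" by simp
      show "set w \<inter> {a, b} = {}" using w'(2) by blast
      show "distinct w" using w'(1) .
      have sub: "{a, b} \<subseteq> {1..n}" using ab by simp
      show "{a, b} \<union> set w = {1..n}" unfolding w'(2) using sub by blast
    qed
    moreover have "map card Bs = ?bsz" unfolding Bs using ab len by (simp add: comp_def map_replicate_const)
    moreover have "\<not> op_contains Bs [1,2,3]"
    proof -
      have "\<not> has12 a w" "\<not> has123 w" using av_char[OF w'(1), of a] w'(3) by simp_all
      moreover have "\<not> has12 b w" using has12_mono[of b w a] ab \<open>\<not> has12 a w\<close> by auto
      ultimately show ?thesis unfolding Bs contains_P by auto
    qed
    ultimately have "ordered_set_partition {1..n} Bs \<and> map card Bs = ?bsz \<and> \<not> op_contains Bs [1,2,3]"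
      by (intro conjI)
    then show "Bs \<in> ?T" by simp
  qed
  have inj: "inj_on g D"
  proof (rule inj_onI)
    fix u v assume u: "u \<in> D" and v: "v \<in> D" and e: "g u = g v"
    obtain a b w where uu: "u = ((a,b),w)" "a < b" using u unfolding D_def Pairs_def by auto
    obtain a' b' w' where vv: "v = ((a',b'),w')" "a' < b'" using v unfolding D_def Pairs_def by auto
    have "{a,b} = {a',b'}" "map (\<lambda>x. {x}) w = map (\<lambda>x. {x}) w'" using e uu vv unfolding g_def by auto
    then have "a = a'" "b = b'" "w = w'" using uu(2) vv(2)
      by (auto simp: doubleton_eq_iff inj_map_eq_map inj_def)
    then show "u = v" using uu vv by simp
  qed
  have finP: "finite Pairs" unfolding Pairs_def by auto
  have cardL: "card (L ({1..n} - {fst p, snd p}) (fst p)) = F k (fst p - 1)" if pP: "p \<in> Pairs" for p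
  proof -
    obtain a b where p: "p = (a,b)" "1 \<le> a" "a < b" "b \<le> n" using pP unfolding Pairs_def by auto
    have "card ({1..n} - {a,b}) = k" using p nk by (subst card_Diff_subset) auto
    moreover have "{s\<in>{1..n} - {a,b}. s \<le> a} = {1..<a}" using p by auto
    ultimately show ?thesis using L_card[of "{1..n} - {a,b}" a] p by simp
  qed
  have "card ?T = card D" using TD card_image[OF inj] by simp
  also have "\<dots> = (\<Sum>p\<in>Pairs. card (L ({1..n} - {fst p, snd p}) (fst p)))"
    unfolding D_def using finP by (intro card_SigmaI) (auto intro: L_finite)
  also have "\<dots> = (\<Sum>p\<in>Pairs. F k (fst p - 1))" using cardL by (rule sum.cong[OF refl])
  also have "\<dots> = (\<Sum>a\<in>{1..n}. \<Sum>b\<in>{a<..n}. F k (a - 1))"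
  proof -
    have "(\<Sum>a\<in>{1..n}. \<Sum>b\<in>{a<..n}. F k (a - 1)) = (\<Sum>(a,b)\<in>Pairs. F k (a - 1))"
      unfolding Pairs_def by (rule sum.Sigma) auto
    also have "\<dots> = (\<Sum>p\<in>Pairs. F k (fst p - 1))" by (simp add: split_beta)
    finally show ?thesis by simp
  qed
  also have "\<dots> = (\<Sum>a\<in>{Suc 0..n}. (n - a) * F k (a - 1))" by simp
  also have "\<dots> = (\<Sum>r<n. (n - Suc r) * F k r)" by (simp only: sum.atLeast1_atMost_eq diff_Suc_1)
  also have "\<dots> = (\<Sum>r\<le>k. (k + 1 - r) * F k r)"
    unfolding nk lessThan_Suc_atMost sum.atMost_Suc by simp
  also have "\<dots> = F (Suc (Suc k)) k" using F_tri by simp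
  finally have "real (op_count ?bsz [1,2,3]) = G (Suc (Suc k)) k"
    using oc F_closed[of k "Suc (Suc k)"] by simp
  then show ?thesis using final_arith nk by simp
qed


end
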